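(* Suppose RLSVI (as in the context) is applied with parameters $(\lambda,v,\bar\theta)$ with $v/\lambda=\beta\geq 2$, $v=H^2$ and $\bar\theta = H\mathbf{1}$ (all entries equal to $H$). Then for every $L\in\mathbb{N}$, \[ \mathbb{E}\Big[\max_{\ell\le L,\ t<H}\|V_{Q_{\ell,t+1}}\|_\infty\Big] \leq 2H + H^2\sqrt{\log(1+|\mathcal{X}||\mathcal{A}|HL)}. \]
   Context: Setting: episodic MDP with finite state set $\mathcal{X}$, finite action set $\mathcal{A}$, horizon $H$; in episode $k$ and period $t\in\{0,\dots,H-1\}$ the agent is in $x^k_t$, takes $a^k_t$ and observes an outcome $(r^k_{t+1},x^k_{t+1})\in\{0,1\}\times\mathcal{X}$ (rewards in $\{0,1\}$). RLSVI with parameters $\bar\theta$, $v,\lambda>0$: $D_{\ell-1}(t,x,a)$ is the multiset of outcomes from episodes $k<\ell$ with $x^k_t=x,a^k_t=a$, $n_\ell(t,x,a)$ its size, $\sigma^2_\ell(t,x,a) = (1/\lambda+n_\ell(t,x,a)/v)^{-1}$, $w_\ell(t,x,a)=\sigma_\ell(t,x,a)\xi_{\ell,t,x,a}$ with $\xi$'s i.i.d. standard normal independent of everything else; \[F_{\ell,t}Q(x,a) = \sigma^2_\ell(t,x,a)\Big(\frac{\bar\theta_{t,x,a}}{\lambda}+\frac1v\sum_{(r,x')\in D_{\ell-1}(t,x,a)}\big(r+\max_{a'}Q(x',a')\big)\Big)+w_\ell(t,x,a);\] $Q_{\ell,H}=0$, $Q_{\ell,t}=F_{\ell,t}Q_{\ell,t+1}$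 for $t<H$; actions are greedy w.r.t. $Q_{\ell,t}$. For $Q\in\mathbb{R}^{\mathcal{X}\times\mathcal{A}}$, $V_Q(r,x') = r+\max_{a'}Q(x',a')$ is a function on $\{0,1\}\times\mathcal{X}$ and $\|\cdot\|_\infty$ is its sup norm. *)

theory Defs
  imports "HOL-Probability.Probability"
begin

(* A step of a trajectory: (state x_t, action a_t, reward r_{t+1}, next state x_{t+1}).
   Rewards in {0,1} are encoded as bool (True = 1). *)
type_synonym ('x,'a) step = "'x \<times> 'a \<times> bool \<times> 'x"

definition rew :: "bool \<Rightarrow> real" where
  "rew r = (if r then 1 else 0)"

definition VQ :: "('x::finite \<Rightarrow> 'a::finite \<Rightarrow> real) \<Rightarrow> bool \<Rightarrow> 'x \<Rightarrow> real" where
  "VQ Q r y = rew r + Max (range (Q y))"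

definition VQnorm :: "('x::finite \<Rightarrow> 'a::finite \<Rightarrow> real) \<Rightarrow> real" where
  "VQnorm Q = Max {\<bar>VQ Q r y\<bar> | r y. True}"

definition sig2 :: "real \<Rightarrow> real \<Rightarrow> nat \<Rightarrow> real" where
  "sig2 lam v n = inverse (1 / lam + real n / v)"

(* episodes k with 1 <= k < l whose period-t state-action pair is (x,a);
   hist k t is the step of episode k in period t *)
definition Didx :: "(nat \<Rightarrow> nat \<Rightarrow> ('x,'a) step) \<Rightarrow> nat \<Rightarrow> nat \<Rightarrow> 'x \<Rightarrow> 'a \<Rightarrow> nat set" where
  "Didx hist l t x a = {k \<in> {1..<l}. fst (hist k t) = x \<and> fst (snd (hist k t)) = a}"

definition Fop :: "real \<Rightarrow> real \<Rightarrow> (nat \<Rightarrow> 'x \<Rightarrow> 'a \<Rightarrow> real) \<Rightarrow> (nat \<Rightarrow> nat \<Rightarrow> 'x \<Rightarrow> 'a \<Rightarrow> real)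
    \<Rightarrow> (nat \<Rightarrow> nat \<Rightarrow> ('x::finite,'a::finite) step) \<Rightarrow> nat \<Rightarrow> nat
    \<Rightarrow> ('x \<Rightarrow> 'a \<Rightarrow> real) \<Rightarrow> 'x \<Rightarrow> 'a \<Rightarrow> real" where
  "Fop lam v thbar xi hist l t Q x a =
     (let n = card (Didx hist l t x a) in
      sig2 lam v n * (thbar t x a / lam
        + (1 / v) * (\<Sum>k\<in>Didx hist l t x a. VQ Q (fst (snd (snd (hist k t)))) (snd (snd (snd (hist k t))))))
      + sqrt (sig2 lam v n) * xi l t x a)"

(* Qb m = Q_{l,H-m}: backward recursion Q_{l,H} = 0, Q_{l,t} = F_{l,t} Q_{l,t+1} *)
fun Qb :: "nat \<Rightarrow> real \<Rightarrow> real \<Rightarrow> (nat \<Rightarrow> 'x \<Rightarrow> 'a \<Rightarrow> real) \<Rightarrow> (nat \<Rightarrow> nat \<Rightarrow> 'x \<Rightarrow> 'a \<Rightarrow> real)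
    \<Rightarrow> (nat \<Rightarrow> nat \<Rightarrow> ('x::finite,'a::finite) step) \<Rightarrow> nat \<Rightarrow> nat \<Rightarrow> 'x \<Rightarrow> 'a \<Rightarrow> real" where
  "Qb H lam v thbar xi hist l 0 = (\<lambda>x a. 0)"
| "Qb H lam v thbar xi hist l (Suc m) =
     Fop lam v thbar xi hist l (H - Suc m) (Qb H lam v thbar xi hist l m)"

definition Qv :: "nat \<Rightarrow> real \<Rightarrow> real \<Rightarrow> (nat \<Rightarrow> 'x \<Rightarrow> 'a \<Rightarrow> real) \<Rightarrow> (nat \<Rightarrow> nat \<Rightarrow> 'x \<Rightarrow> 'a \<Rightarrow> real)
    \<Rightarrow> (nat \<Rightarrow> nat \<Rightarrow> ('x::finite,'a::finite) step) \<Rightarrow> nat \<Rightarrow> nat \<Rightarrow> 'x \<Rightarrow> 'a \<Rightarrow> real" where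
  "Qv H lam v thbar xi hist l t = Qb H lam v thbar xi hist l (H - t)"

(* states of episode l, given the Q-functions q t of the episode, greedy selector sel,
   the environment outcome table env and initial state x0 *)
primrec epSt :: "(('a \<Rightarrow> real) \<Rightarrow> 'a) \<Rightarrow> (nat \<times> nat \<times> 'x \<times> 'a \<Rightarrow> bool \<times> 'x)
    \<Rightarrow> nat \<Rightarrow> (nat \<Rightarrow> 'x \<Rightarrow> 'a \<Rightarrow> real) \<Rightarrow> 'x \<Rightarrow> nat \<Rightarrow> 'x" where
  "epSt sel env l q x0 0 = x0"
| "epSt sel env l q x0 (Suc t) =
     (let x = epSt sel env l q x0 t in snd (env (l, t, x, sel (q t x))))"

definition epStep :: "(('a \<Rightarrow> real) \<Rightarrow> 'a) \<Rightarrow> (nat \<times> nat \<times> 'x \<times> 'a \<Rightarrow> bool \<times> 'x)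
    \<Rightarrow> nat \<Rightarrow> (nat \<Rightarrow> 'x \<Rightarrow> 'a \<Rightarrow> real) \<Rightarrow> 'x \<Rightarrow> nat \<Rightarrow> ('x,'a) step" where
  "epStep sel env l q x0 t =
     (let x = epSt sel env l q x0 t; a = sel (q t x); out = env (l, t, x, a) in (x, a, fst out, snd out))"

(* histUpTo n k t = step of episode k (1 <= k <= n) in period t, when RLSVI is run on
   noise xi, environment table env, initial states init *)
primrec histUpTo :: "nat \<Rightarrow> real \<Rightarrow> real \<Rightarrow> (nat \<Rightarrow> 'x \<Rightarrow> 'a \<Rightarrow> real) \<Rightarrow> (('a \<Rightarrow> real) \<Rightarrow> 'a)
    \<Rightarrow> (nat \<Rightarrow> nat \<Rightarrow> 'x \<Rightarrow> 'a \<Rightarrow> real) \<Rightarrow> (nat \<times> nat \<times> 'x \<times> 'a \<Rightarrow> bool \<times> 'x) \<Rightarrow> (nat \<Rightarrow> 'x)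
    \<Rightarrow> nat \<Rightarrow> nat \<Rightarrow> nat \<Rightarrow> ('x::finite,'a::finite) step" where
  "histUpTo H lam v thbar sel xi env init 0 = (\<lambda>k t. undefined)"
| "histUpTo H lam v thbar sel xi env init (Suc n) =
     (let h = histUpTo H lam v thbar sel xi env init n in
      h(Suc n := epStep sel env (Suc n) (Qv H lam v thbar xi h (Suc n)) (init (Suc n))))"

definition Qrlsvi :: "nat \<Rightarrow> real \<Rightarrow> real \<Rightarrow> (nat \<Rightarrow> 'x::finite \<Rightarrow> 'a::finite \<Rightarrow> real) \<Rightarrow> (('a \<Rightarrow> real) \<Rightarrow> 'a)
    \<Rightarrow> (nat \<Rightarrow> nat \<Rightarrow> 'x \<Rightarrow> 'a \<Rightarrow> real) \<Rightarrow> (nat \<times> nat \<times> 'x \<times> 'a \<Rightarrow> bool \<times> 'x) \<Rightarrow> (nat \<Rightarrow> 'x)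
    \<Rightarrow> nat \<Rightarrow> nat \<Rightarrow> 'x \<Rightarrow> 'a \<Rightarrow> real" where
  "Qrlsvi H lam v thbar sel xi env init l t =
     Qv H lam v thbar xi (histUpTo H lam v thbar sel xi env init (l - 1)) l t"

(* The probability space: i.i.d. standard normal xi_{l,t,x,a}, independent of an
   independent table of MDP outcomes env(k,t,x,a) ~ P t x a and independent initial
   states init k ~ mu0 *)
definition rlsvi_space :: "(nat \<Rightarrow> 'x \<Rightarrow> 'a \<Rightarrow> (bool \<times> 'x) pmf) \<Rightarrow> 'x pmf \<Rightarrow>
    ((nat \<times> nat \<times> 'x \<times> 'a \<Rightarrow> real) \<times> (nat \<times> nat \<times> 'x \<times> 'a \<Rightarrow> bool \<times> 'x) \<times> (nat \<Rightarrow> 'x)) measure" where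
  "rlsvi_space P mu0 =
     (PiM UNIV (\<lambda>_. density lborel std_normal_density)) \<Otimes>\<^sub>M
     ((PiM UNIV (\<lambda>(k,t,x,a). measure_pmf (P t x a))) \<Otimes>\<^sub>M (PiM UNIV (\<lambda>k. measure_pmf mu0)))"

end

theory Submission imports Defs begin

lemma dens_shift: "std_normal_density x * exp (s*x) = exp (s^2/2) * normal_density s 1 x"
proof -
  have "exp (- x\<^sup>2 / 2) * exp (s*x) = exp (s^2/2) * exp (-(x - s)\<^sup>2/ (2 * 1\<^sup>2))"
    by (simp add: exp_add[symmetric] power2_eq_square field_simps)
  then show ?thesis unfolding std_normal_density_def normal_density_def by simp
qed

lemma gauss_mgf: "(\<integral>\<^sup>+x. ennreal (std_normal_density x * exp (s*x)) \<partial>lborel) = ennreal (exp (s^2/2))"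
proof -
  have "(\<integral>\<^sup>+x. ennreal (std_normal_density x * exp (s*x)) \<partial>lborel)
       = (\<integral>\<^sup>+x. ennreal (exp (s^2/2)) * ennreal (normal_density s 1 x) \<partial>lborel)"
    by (simp add: dens_shift ennreal_mult)
  also have "\<dots> = ennreal (exp (s^2/2)) * (\<integral>\<^sup>+x. ennreal (normal_density s 1 x) \<partial>lborel)"
    by (rule nn_integral_cmult) simp
  also have "(\<integral>\<^sup>+x. ennreal (normal_density s 1 x) \<partial>lborel) = 1"
    by (subst nn_integral_eq_integral) auto
  finally show ?thesis by simp
qed

lemma gauss_abs: "(\<integral>\<^sup>+x. ennreal (exp (s*\<bar>x\<bar>)) \<partial>density lborel std_normal_density) \<le> ennreal (2 * exp (s^2/2))"
proof -
  have "(\<integral>\<^sup>+x. ennreal (exp (s*\<bar>x\<bar>)) \<partial>density lborel std_normal_density)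
     = (\<integral>\<^sup>+x. ennreal (std_normal_density x) * ennreal (exp (s*\<bar>x\<bar>)) \<partial>lborel)"
    by (subst nn_integral_density) auto
  also have "\<dots> \<le> (\<integral>\<^sup>+x. ennreal (std_normal_density x * exp (s*x)) + ennreal (std_normal_density x * exp ((-s)*x)) \<partial>lborel)"
  proof (rule nn_integral_mono)
    fix x
    have "exp (s*\<bar>x\<bar>) \<le> exp (s*x) + exp ((-s)*x)"
      by (cases "x \<ge> 0") (auto simp: add_increasing add_increasing2)
    then have "std_normal_density x * exp (s*\<bar>x\<bar>) \<le> std_normal_density x * exp (s*x) + std_normal_density x * exp ((-s)*x)"
      by (metis distrib_left mult_left_mono normal_density_nonneg)
    then show "ennreal (std_normal_density x) * ennreal (exp (s*\<bar>x\<bar>)) \<le> ennreal (std_normal_density x * exp (s*x)) + ennreal (std_normal_density x * exp ((-s)*x))"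
      by (simp add: ennreal_mult[symmetric] ennreal_plus[symmetric] del: ennreal_plus)
  qed
  also have "\<dots> = ennreal (exp (s^2/2)) + ennreal (exp ((-s)^2/2))"
    using gauss_mgf[of s] gauss_mgf[of "-s"] by (subst nn_integral_add) auto
  also have "\<dots> = ennreal (2 * exp (s^2/2))"
    by (simp add: ennreal_plus[symmetric] del: ennreal_plus)
  finally show ?thesis .
qed

lemma marg:
  fixes g :: "real \<Rightarrow> ennreal" and P :: "nat \<Rightarrow> 'x \<Rightarrow> 'a \<Rightarrow> (bool \<times> 'x) pmf"
  assumes g: "g \<in> borel_measurable borel"
  shows "(\<integral>\<^sup>+\<omega>. g (fst \<omega> i) \<partial>rlsvi_space P mu0) = (\<integral>\<^sup>+x. g x \<partial>density lborel std_normal_density)"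
proof -
  let ?N = "PiM UNIV (\<lambda>_::(nat \<times> nat \<times> 'x \<times> 'a). density lborel std_normal_density)"
  let ?M = "(PiM UNIV (\<lambda>(k::nat,t,x,a). measure_pmf (P t x a))) \<Otimes>\<^sub>M (PiM UNIV (\<lambda>k::nat. measure_pmf mu0))"
  have pM: "prob_space ?M"
    by (intro prob_space_pair prob_space_PiM) (auto simp: prob_space_measure_pmf split: prod.splits)
  have pN: "product_prob_space (\<lambda>_::(nat \<times> nat \<times> 'x \<times> 'a). density lborel std_normal_density)"
    by (intro product_prob_spaceI prob_space_normal_density) simp
  have mg: "(\<lambda>y. g (y i)) \<in> borel_measurable ?N"
    using g by measurable
  have "(\<integral>\<^sup>+\<omega>. g (fst \<omega> i) \<partial>rlsvi_space P mu0) = (\<integral>\<^sup>+\<omega>. g (fst \<omega> i) \<partial>(?N \<Otimes>\<^sub>M ?M))"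
    unfolding rlsvi_space_def by simp
  also have "\<dots> = (\<integral>\<^sup>+y. g (y i) \<partial>distr (?N \<Otimes>\<^sub>M ?M) ?N fst)"
    by (subst nn_integral_distr) (use mg in auto)
  also have "distr (?N \<Otimes>\<^sub>M ?M) ?N fst = ?N"
    by (rule prob_space.distr_pair_fst[OF pM])
  also have "(\<integral>\<^sup>+y. g (y i) \<partial>?N) = (\<integral>\<^sup>+x. g x \<partial>distr ?N (density lborel std_normal_density) (\<lambda>y. y i))"
    by (subst nn_integral_distr) (use g in auto)
  also have "distr ?N (density lborel std_normal_density) (\<lambda>y. y i) = density lborel std_normal_density"
    by (rule product_prob_space.PiM_component[OF pN]) simp
  finally show ?thesis .
qed

lemma VQ_bound:
  fixes Q :: "'x::finite \<Rightarrow> 'a::finite \<Rightarrow> real"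
  assumes "\<And>y a. \<bar>Q y a\<bar> \<le> B"
  shows "\<bar>VQ Q r y\<bar> \<le> 1 + B"
proof -
  have "Max (range (Q y)) \<in> range (Q y)" by (rule Max_in) auto
  then obtain a0 where "Max (range (Q y)) = Q y a0" by blast
  then show ?thesis using assms[of y a0] unfolding VQ_def rew_def by auto
qed

lemma VQnorm_bound:
  fixes Q :: "'x::finite \<Rightarrow> 'a::finite \<Rightarrow> real"
  assumes "\<And>y a. \<bar>Q y a\<bar> \<le> B"
  shows "VQnorm Q \<le> 1 + B"
proof -
  have eq: "{\<bar>VQ Q r y\<bar> | r y. True} = (\<lambda>(r,y). \<bar>VQ Q r y\<bar>) ` UNIV" by auto
  show ?thesis unfolding VQnorm_def eq
    by (subst Max_le_iff) (auto intro: VQ_bound[OF assms])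
qed

lemma Fop_bound:
  fixes Q :: "'x::finite \<Rightarrow> 'a::finite \<Rightarrow> real"
  assumes lam: "lam > 0" and v: "v > 0"
    and QB: "\<And>y a. \<bar>Q y a\<bar> \<le> B" and HbB: "Hb \<le> B"
    and th: "\<bar>thbar t x a\<bar> \<le> Hb" and xi: "\<bar>xi l t x a\<bar> \<le> Z"
  shows "\<bar>Fop lam v thbar xi hist l t Q x a\<bar> \<le> 1 + B + sqrt lam * Z"
proof -
  define D where "D = Didx hist l t x a"
  define n where "n = card D"
  define s2 where "s2 = sig2 lam v n"
  define S where "S = (\<Sum>k\<in>D. VQ Q (fst (snd (snd (hist k t)))) (snd (snd (snd (hist k t)))))"
  have finD: "finite D" unfolding D_def Didx_def by auto
  have den: "1 / lam + real n / v > 0" using lam v by (simp add: add_pos_nonneg)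
  have s2pos: "s2 > 0" unfolding s2_def sig2_def using den by simp
  have s2id: "s2 * (1 / lam + real n / v) = 1" unfolding s2_def sig2_def using den by simp
  have s2le: "s2 \<le> lam"
  proof -
    have "1 / lam \<le> 1 / lam + real n / v" using v by simp
    then have "inverse (1 / lam + real n / v) \<le> inverse (1 / lam)"
      using lam by (intro le_imp_inverse_le) auto
    then show ?thesis unfolding s2_def sig2_def using lam by simp
  qed
  have B0: "0 \<le> 1 + B" using QB[of undefined undefined] by linarith
  have Sb: "\<bar>S\<bar> \<le> real n * (1 + B)"
  proof -
    have "\<bar>S\<bar> \<le> (\<Sum>k\<in>D. \<bar>VQ Q (fst (snd (snd (hist k t)))) (snd (snd (snd (hist k t))))\<bar>)"
      unfolding S_def by (rule sum_abs)
    also have "\<dots> \<le> (\<Sum>k\<in>D. 1 + B)" by (intro sum_mono VQ_bound QB)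
    also have "\<dots> = real n * (1 + B)" unfolding n_def by simp
    finally show ?thesis .
  qed
  have p1: "\<bar>s2 * (thbar t x a / lam + (1 / v) * S)\<bar> \<le> 1 + B"
  proof -
    have "\<bar>thbar t x a / lam + (1 / v) * S\<bar> \<le> \<bar>thbar t x a\<bar> / lam + (1/v) * \<bar>S\<bar>"
    proof -
      have "\<bar>thbar t x a / lam + (1 / v) * S\<bar> \<le> \<bar>thbar t x a / lam\<bar> + \<bar>(1 / v) * S\<bar>"
        by (rule abs_triangle_ineq)
      also have "\<dots> = \<bar>thbar t x a\<bar> / lam + (1/v) * \<bar>S\<bar>"
        using lam v by (simp add: abs_mult abs_divide)
      finally show ?thesis .
    qed
    also have "\<dots> \<le> (1 + B) / lam + (1/v) * (real n * (1 + B))"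
      using th HbB lam v Sb by (intro add_mono divide_right_mono mult_left_mono) auto
    also have "\<dots> = (1 + B) * (1 / lam + real n / v)" by (simp add: field_simps)
    finally have "\<bar>thbar t x a / lam + (1 / v) * S\<bar> \<le> (1 + B) * (1 / lam + real n / v)" .
    then have "s2 * \<bar>thbar t x a / lam + (1 / v) * S\<bar> \<le> s2 * ((1 + B) * (1 / lam + real n / v))"
      using s2pos by (intro mult_left_mono) auto
    also have "\<dots> = 1 + B" using s2id by (metis mult.left_commute mult_1_right)
    finally show ?thesis using s2pos by (simp add: abs_mult)
  qed
  have p2: "\<bar>sqrt s2 * xi l t x a\<bar> \<le> sqrt lam * Z"
  proof -
    have "\<bar>sqrt s2 * xi l t x a\<bar> = sqrt s2 * \<bar>xi l t x a\<bar>" using s2pos by (simp add: abs_mult)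
    also have "\<dots> \<le> sqrt lam * Z"
      using s2le s2pos xi by (intro mult_mono) auto
    finally show ?thesis .
  qed
  have eq: "Fop lam v thbar xi hist l t Q x a = s2 * (thbar t x a / lam + (1 / v) * S) + sqrt s2 * xi l t x a"
    unfolding Fop_def Let_def s2_def n_def D_def S_def by simp
  show ?thesis unfolding eq by (rule order_trans[OF abs_triangle_ineq add_mono[OF p1 p2]])
qed

lemma Qb_bound:
  fixes xi :: "nat \<Rightarrow> nat \<Rightarrow> 'x::finite \<Rightarrow> 'a::finite \<Rightarrow> real"
  assumes lam: "lam > 0" and v: "v > 0" and Hb: "Hb \<ge> 0"
    and th: "\<And>t x a. \<bar>thbar t x a\<bar> \<le> Hb" and xi: "\<And>t x a. \<bar>xi l t x a\<bar> \<le> Z t"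
    and "m \<le> H"
  shows "\<bar>Qb H lam v thbar xi hist l m x a\<bar> \<le> Hb + real m + sqrt lam * (\<Sum>t\<in>{H-m..<H}. Z t)"
  using assms(6)
proof (induction m arbitrary: x a)
  case 0
  then show ?case using Hb by simp
next
  case (Suc m)
  have Z0: "\<And>t. Z t \<ge> 0" using xi by (meson abs_ge_zero order_trans)
  define B where "B = Hb + real m + sqrt lam * (\<Sum>t\<in>{H-m..<H}. Z t)"
  have QB: "\<And>y b. \<bar>Qb H lam v thbar xi hist l m y b\<bar> \<le> B" using Suc unfolding B_def by auto
  have HbB: "Hb \<le> B" unfolding B_def using Z0 lam by (auto intro!: add_nonneg_nonneg mult_nonneg_nonneg sum_nonneg)
  have set: "{H - Suc m..<H} = insert (H - Suc m) {H-m..<H}" using Suc.prems by auto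
  have "\<bar>Qb H lam v thbar xi hist l (Suc m) x a\<bar> \<le> 1 + B + sqrt lam * Z (H - Suc m)"
    using Fop_bound[where Q="Qb H lam v thbar xi hist l m" and B=B and Hb=Hb and Z="Z (H - Suc m)" and thbar=thbar and xi=xi and l=l and t="H - Suc m" and x=x and a=a and hist=hist, OF lam v QB HbB th xi] by simp
  also have "\<dots> = Hb + real (Suc m) + sqrt lam * (\<Sum>t\<in>{H - Suc m..<H}. Z t)"
    unfolding set B_def using Suc.prems by (simp add: algebra_simps)
  finally show ?case .
qed

lemma rlsvi_prob: "prob_space (rlsvi_space P mu0)"
  unfolding rlsvi_space_def
  by (intro prob_space_pair prob_space_PiM prob_space_normal_density)
     (auto simp: prob_space_measure_pmf split: prod.splits)

lemma logsum_bound: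
  fixes w :: "'i \<Rightarrow> real"
  assumes "finite I" "y \<in> I" "s > 0" "K > 0"
  shows "\<bar>w y\<bar> \<le> (ln K - 1) / s + (\<Sum>i\<in>I. exp (s * \<bar>w i\<bar>)) / (s * K)"
proof -
  define T where "T = (\<Sum>i\<in>I. exp (s * \<bar>w i\<bar>))"
  have "exp (s * \<bar>w y\<bar>) \<le> T" unfolding T_def
    using assms by (intro member_le_sum) auto
  then have Tpos: "T > 0" using exp_gt_zero[of "s * \<bar>w y\<bar>"] by linarith
  have "s * \<bar>w y\<bar> \<le> ln T"
    using \<open>exp (s * \<bar>w y\<bar>) \<le> T\<close> Tpos by (simp add: ln_ge_iff)
  also have "ln T = ln K + ln (T / K)" using Tpos assms by (simp add: ln_div)
  also have "ln (T / K) \<le> T / K - 1" using Tpos assms by (intro ln_le_minus_one) simp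
  finally have "s * \<bar>w y\<bar> \<le> ln K - 1 + T / K" by simp
  then have "\<bar>w y\<bar> \<le> (ln K - 1 + T / K) / s" using assms by (simp add: field_simps)
  also have "\<dots> = (ln K - 1) / s + T / (s * K)" using assms by (simp add: field_simps)
  finally show ?thesis unfolding T_def .
qed

theorem mainTheorem9:
  fixes H L :: nat and beta :: real
    and P :: "nat \<Rightarrow> 'x::finite \<Rightarrow> 'a::finite \<Rightarrow> (bool \<times> 'x) pmf" and mu0 :: "'x pmf"
    and sel :: "('a \<Rightarrow> real) \<Rightarrow> 'a"
  assumes "H > 0" and "beta \<ge> 2"
    and "\<And>f b. f b \<le> f (sel f)"
  shows "(\<integral>\<^sup>+ \<omega>. (SUP p \<in> {1..L} \<times> {..<H}.
            ennreal (VQnorm (Qrlsvi H (real H ^ 2 / beta) (real H ^ 2) (\<lambda>t x a. real H) sel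
                (\<lambda>l t x a. fst \<omega> (l, t, x, a)) (fst (snd \<omega>)) (snd (snd \<omega>)) (fst p) (snd p + 1))))
          \<partial>rlsvi_space P mu0)
         \<le> ennreal (2 * real H + real H ^ 2 *
              sqrt (ln (1 + real (CARD('x)) * real (CARD('a)) * real H * real L)))"
proof (cases "L = 0")
  case True
  then show ?thesis by (simp add: bot_ennreal)
next
  case False
  note Hpos = \<open>H > 0\<close> and beta = \<open>beta \<ge> 2\<close>
  define M where "M = rlsvi_space P mu0"
  define lam where "lam = real H ^ 2 / beta"
  define c where "c = sqrt lam"
  define I where "I = {1..L} \<times> (UNIV :: 'x set) \<times> (UNIV :: 'a set)"
  define n where "n = L * CARD('x) * CARD('a)"
  define lg where "lg = ln (2 * real n)"
  define s where "s = sqrt (2 * lg)"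
  define K where "K = (2 * real n) ^ 2"
  define e where "e = (\<lambda>t (i :: nat \<times> 'x \<times> 'a) (\<omega> :: (nat \<times> nat \<times> 'x \<times> 'a \<Rightarrow> real) \<times> (nat \<times> nat \<times> 'x \<times> 'a \<Rightarrow> bool \<times> 'x) \<times> (nat \<Rightarrow> 'x)).
     exp (s * \<bar>fst \<omega> (fst i, t, fst (snd i), snd (snd i))\<bar>))"
  define F where "F = (\<lambda>\<omega>. \<Sum>t\<in>{1..<H}. \<Sum>i\<in>I. e t i \<omega>)"
  define Zt where "Zt = (\<lambda>\<omega> t. (ln K - 1) / s + (\<Sum>i\<in>I. e t i \<omega>) / (s * K))"
  define A where "A = 2 * real H + c * real (H - 1) * (ln K - 1) / s"
  define C where "C = c / (s * K)"
  have finI: "finite I" unfolding I_def by simp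
  have cardI: "card I = n" unfolding I_def n_def by (simp add: card_cartesian_product)
  have n1: "n \<ge> 1" using False unfolding n_def by simp
  have lgpos: "lg > 0" unfolding lg_def using n1 by simp
  have spos: "s > 0" unfolding s_def using lgpos by simp
  have s2: "s ^ 2 = 2 * lg" unfolding s_def using lgpos by simp
  have expl: "exp (s ^ 2 / 2) = 2 * real n" unfolding s2 lg_def using n1 by simp
  have Kpos: "K > 0" unfolding K_def using n1 by simp
  have lnK: "ln K = 2 * lg"
  proof -
    have "ln ((2*real n)*(2*real n)) = ln (2*real n) + ln (2*real n)" by (rule ln_mult_pos) (use n1 in simp)+
    then show ?thesis unfolding K_def lg_def power2_eq_square by linarith
  qed
  have lnK1: "ln K \<ge> 1"
  proof -
    have "exp 1 \<le> (3::real)" by (rule exp_le)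
    also have "3 \<le> K"
    proof -
      have "(2::real)^2 \<le> (2*real n)^2" by (rule power_mono) (use n1 in simp)+
      then show ?thesis unfolding K_def by simp
    qed
    finally show ?thesis using Kpos by (simp add: ln_ge_iff)
  qed
  have lampos: "lam > 0" unfolding lam_def using Hpos beta by simp
  have c0: "c \<ge> 0" unfolding c_def using lampos by simp
  have e0: "\<And>t i \<omega>. e t i \<omega> \<ge> 0" unfolding e_def by simp
  have A0: "A \<ge> 0" unfolding A_def using c0 spos lnK1 by simp
  have C0: "C \<ge> 0" unfolding C_def using c0 spos Kpos by simp
  have pw: "(SUP p \<in> {1..L} \<times> {..<H}.
            ennreal (VQnorm (Qrlsvi H (real H ^ 2 / beta) (real H ^ 2) (\<lambda>t x a. real H) sel
                (\<lambda>l t x a. fst \<omega> (l, t, x, a)) (fst (snd \<omega>)) (snd (snd \<omega>)) (fst p) (snd p + 1))))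
          \<le> ennreal A + ennreal C * ennreal (F \<omega>)" for \<omega>
  proof (rule SUP_least)
    fix p assume p: "p \<in> {1..L} \<times> {..<H}"
    define l where "l = fst p"
    define t where "t = snd p"
    have l: "l \<in> {1..L}" and t: "t < H" using p unfolding l_def t_def by auto
    define xi where "xi = (\<lambda>l t x a. fst \<omega> (l, t, x, a))"
    define hist where "hist = histUpTo H lam (real H ^ 2) (\<lambda>t x a. real H) sel xi (fst (snd \<omega>)) (snd (snd \<omega>)) (l - 1)"
    define m where "m = H - (t + 1)"
    have xiZ: "\<bar>xi l t' x a\<bar> \<le> Zt \<omega> t'" for t' x a
    proof -
      have "(l, x, a) \<in> I" using l unfolding I_def by simp
      from logsum_bound[OF finI this spos Kpos, of "\<lambda>i. fst \<omega> (fst i, t', fst (snd i), snd (snd i))"]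
      show ?thesis unfolding xi_def Zt_def e_def by simp
    qed
    have Zt0: "Zt \<omega> t' \<ge> 0" for t'
      using xiZ[of t' undefined undefined] by linarith
    have Qeq: "Qrlsvi H (real H ^ 2 / beta) (real H ^ 2) (\<lambda>t x a. real H) sel
                (\<lambda>l t x a. fst \<omega> (l, t, x, a)) (fst (snd \<omega>)) (snd (snd \<omega>)) (fst p) (snd p + 1)
             = Qb H lam (real H ^ 2) (\<lambda>t x a. real H) xi hist l m"
      unfolding Qrlsvi_def Qv_def lam_def xi_def hist_def l_def t_def m_def by simp
    have Qbd: "\<bar>Qb H lam (real H ^ 2) (\<lambda>t x a. real H) xi hist l m y b\<bar>
               \<le> real H + real m + c * (\<Sum>t'\<in>{H-m..<H}. Zt \<omega> t')" for y b
      unfolding c_def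
      by (rule Qb_bound[OF lampos]) (use Hpos xiZ in \<open>auto simp: m_def\<close>)
    have "VQnorm (Qb H lam (real H ^ 2) (\<lambda>t x a. real H) xi hist l m)
          \<le> 1 + (real H + real m + c * (\<Sum>t'\<in>{H-m..<H}. Zt \<omega> t'))"
      by (rule VQnorm_bound[OF Qbd])
    also have "\<dots> \<le> 2 * real H + c * (\<Sum>t'\<in>{1..<H}. Zt \<omega> t')"
    proof -
      have h1: "1 + real m \<le> real H" unfolding m_def using t by simp
      have h2: "c * (\<Sum>t'\<in>{H-m..<H}. Zt \<omega> t') \<le> c * (\<Sum>t'\<in>{1..<H}. Zt \<omega> t')"
        by (intro mult_left_mono sum_mono2) (use Zt0 t c0 in \<open>auto simp: m_def\<close>)
      show ?thesis using h1 h2 by linarith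
    qed
    also have "2 * real H + c * (\<Sum>t'\<in>{1..<H}. Zt \<omega> t') = A + C * F \<omega>"
    proof -
      have "(\<Sum>t'\<in>{1..<H}. Zt \<omega> t') = real (H - 1) * ((ln K - 1) / s) + F \<omega> / (s * K)"
        unfolding Zt_def F_def by (simp add: sum.distrib sum_divide_distrib)
      then show ?thesis unfolding A_def C_def by (simp add: algebra_simps)
    qed
    finally have "VQnorm (Qb H lam (real H ^ 2) (\<lambda>t x a. real H) xi hist l m) \<le> A + C * F \<omega>" .
    then have "ennreal (VQnorm (Qb H lam (real H ^ 2) (\<lambda>t x a. real H) xi hist l m)) \<le> ennreal (A + C * F \<omega>)"
      by (rule ennreal_leI)
    also have "\<dots> = ennreal A + ennreal C * ennreal (F \<omega>)"
      using A0 C0 e0 unfolding F_def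
      by (simp add: ennreal_plus ennreal_mult sum_nonneg)
    finally show "ennreal (VQnorm (Qrlsvi H (real H ^ 2 / beta) (real H ^ 2) (\<lambda>t x a. real H) sel
                (\<lambda>l t x a. fst \<omega> (l, t, x, a)) (fst (snd \<omega>)) (snd (snd \<omega>)) (fst p) (snd p + 1)))
          \<le> ennreal A + ennreal C * ennreal (F \<omega>)" unfolding Qeq .
  qed
  have me: "(\<lambda>\<omega>. ennreal (e t i \<omega>)) \<in> borel_measurable M" for t i
    unfolding e_def M_def rlsvi_space_def by measurable
  have ie: "(\<integral>\<^sup>+\<omega>. ennreal (e t i \<omega>) \<partial>M) \<le> ennreal (4 * real n)" for t i
  proof -
    have "(\<integral>\<^sup>+\<omega>. ennreal (e t i \<omega>) \<partial>M)
         = (\<integral>\<^sup>+x. ennreal (exp (s * \<bar>x\<bar>)) \<partial>density lborel std_normal_density)"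
      unfolding e_def M_def by (rule marg) measurable
    also have "\<dots> \<le> ennreal (2 * exp (s^2/2))" by (rule gauss_abs)
    also have "\<dots> = ennreal (4 * real n)" unfolding expl by simp
    finally show ?thesis .
  qed
  have iF: "(\<integral>\<^sup>+\<omega>. ennreal (F \<omega>) \<partial>M) \<le> ennreal (real (H - 1) * (real n * (4 * real n)))"
  proof -
    have "(\<integral>\<^sup>+\<omega>. ennreal (F \<omega>) \<partial>M) = (\<integral>\<^sup>+\<omega>. (\<Sum>t\<in>{1..<H}. \<Sum>i\<in>I. ennreal (e t i \<omega>)) \<partial>M)"
      unfolding F_def using e0 by (simp add: sum_nonneg)
    also have "\<dots> = (\<Sum>t\<in>{1..<H}. \<Sum>i\<in>I. (\<integral>\<^sup>+\<omega>. ennreal (e t i \<omega>) \<partial>M))"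
      using me finI by (simp add: nn_integral_sum)
    also have "\<dots> \<le> (\<Sum>t\<in>{1..<H}. \<Sum>i\<in>I. ennreal (4 * real n))"
      by (intro sum_mono ie)
    also have "\<dots> = ennreal (real (H - 1) * (real n * (4 * real n)))"
      using cardI by (simp add: ennreal_of_nat_eq_real_of_nat ennreal_mult)
    finally show ?thesis .
  qed
  have "(\<integral>\<^sup>+ \<omega>. (SUP p \<in> {1..L} \<times> {..<H}.
            ennreal (VQnorm (Qrlsvi H (real H ^ 2 / beta) (real H ^ 2) (\<lambda>t x a. real H) sel
                (\<lambda>l t x a. fst \<omega> (l, t, x, a)) (fst (snd \<omega>)) (snd (snd \<omega>)) (fst p) (snd p + 1))))
          \<partial>M) \<le> (\<integral>\<^sup>+\<omega>. ennreal A + ennreal C * ennreal (F \<omega>) \<partial>M)"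
    by (rule nn_integral_mono) (rule pw)
  also have "\<dots> = ennreal A + ennreal C * (\<integral>\<^sup>+\<omega>. ennreal (F \<omega>) \<partial>M)"
  proof -
    have mF: "(\<lambda>\<omega>. ennreal (F \<omega>)) \<in> borel_measurable M"
      unfolding F_def e_def M_def rlsvi_space_def by measurable
    have "(\<integral>\<^sup>+\<omega>. ennreal A + ennreal C * ennreal (F \<omega>) \<partial>M)
        = (\<integral>\<^sup>+\<omega>. ennreal A \<partial>M) + (\<integral>\<^sup>+\<omega>. ennreal C * ennreal (F \<omega>) \<partial>M)"
      using mF by (intro nn_integral_add) auto
    also have "(\<integral>\<^sup>+\<omega>. ennreal A \<partial>M) = ennreal A"
      using prob_space.emeasure_space_1[OF rlsvi_prob[of P mu0]] unfolding M_def by simp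
    also have "(\<integral>\<^sup>+\<omega>. ennreal C * ennreal (F \<omega>) \<partial>M) = ennreal C * (\<integral>\<^sup>+\<omega>. ennreal (F \<omega>) \<partial>M)"
      using mF by (rule nn_integral_cmult)
    finally show ?thesis .
  qed
  also have "\<dots> \<le> ennreal A + ennreal C * ennreal (real (H - 1) * (real n * (4 * real n)))"
    by (intro add_mono mult_left_mono iF) auto
  also have "\<dots> = ennreal (A + C * (real (H - 1) * (real n * (4 * real n))))"
    using A0 C0 by (simp add: ennreal_plus ennreal_mult)
  also have "\<dots> \<le> ennreal (2 * real H + real H ^ 2 *
              sqrt (ln (1 + real (CARD('x)) * real (CARD('a)) * real H * real L)))"
  proof (rule ennreal_leI)
    have KK: "K = real n * (4 * real n)" unfolding K_def by (simp add: power2_eq_square)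
    have "A + C * (real (H - 1) * (real n * (4 * real n))) = 2 * real H + c * real (H - 1) * (ln K / s)"
      unfolding A_def C_def KK using spos n1 by (simp add: field_simps)
    also have "ln K / s = s" unfolding lnK using spos s2 by (simp add: field_simps power2_eq_square)
    finally have eqA: "A + C * (real (H - 1) * (real n * (4 * real n))) = 2 * real H + c * real (H - 1) * s" .
    have cs: "c * s \<le> real H * sqrt lg"
    proof -
      have "c * s = sqrt (real H ^ 2 / beta * (2 * lg))" unfolding c_def lam_def s_def by (rule real_sqrt_mult[symmetric])
      also have "\<dots> \<le> sqrt (real H ^ 2 * lg)"
      proof (rule real_sqrt_le_mono)
        have "2 * real H ^ 2 \<le> beta * real H ^ 2" using beta by (intro mult_right_mono) auto
        then have "real H ^ 2 / beta * 2 \<le> real H ^ 2" using beta by (simp add: field_simps)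
        then show "real H ^ 2 / beta * (2 * lg) \<le> real H ^ 2 * lg"
          using lgpos by (metis mult.assoc mult_right_mono less_imp_le)
      qed
      also have "\<dots> = real H * sqrt lg" by (simp add: real_sqrt_mult)
      finally show ?thesis .
    qed
    define NN where "NN = real (CARD('x)) * real (CARD('a)) * real H * real L"
    have NN0: "NN \<ge> 0" unfolding NN_def by simp
    have key: "c * real (H - 1) * s \<le> real H ^ 2 * sqrt (ln (1 + NN))"
    proof (cases "H = 1")
      case True then show ?thesis using NN0 by simp
    next
      case False
      then have H2: "H \<ge> 2" using Hpos by simp
      have "2 * n \<le> n * H" using H2 by simp
      then have "real (2 * n) \<le> real (n * H)" by (rule of_nat_mono)
      moreover have "NN = real n * real H" unfolding NN_def n_def by simp
      ultimately have "2 * real n \<le> 1 + NN" by simp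
      then have "lg \<le> ln (1 + NN)" unfolding lg_def using n1 by simp
      then have sq: "sqrt lg \<le> sqrt (ln (1 + NN))" by simp
      have "c * real (H - 1) * s = real (H - 1) * (c * s)" by simp
      also have "\<dots> \<le> real H * (real H * sqrt lg)" by (rule mult_mono) (use cs c0 spos in auto)
      also have "\<dots> \<le> real H * (real H * sqrt (ln (1 + NN)))" using sq by (intro mult_left_mono) auto
      finally show ?thesis by (simp add: power2_eq_square)
    qed
    show "A + C * (real (H - 1) * (real n * (4 * real n))) \<le> 2 * real H + real H ^ 2 *
              sqrt (ln (1 + real (CARD('x)) * real (CARD('a)) * real H * real L))"
      unfolding eqA using key unfolding NN_def by simp
  qed
  finally show ?thesis unfolding M_def .
qed

end
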